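(* Let $k$ be a positive integer and $G$ a finite, simple, undirected, connected graph of order $n\ge2$. (a) If $O_{R,k}(G)=\mathcal{M}$, then $\dim_k(G)\le M_{R,k}(G)\le M'_{R,k}(G)\le\lfloor n/2\rfloor$, $M_{R,k+1}(G)\le M_{R,k}(G)$ and $M'_{R,k+1}(G)\le M'_{R,k}(G)$. (b) If $O_{R,k}(G)=\mathcal{B}$, then $B'_{R,k}(G)\le B_{R,k}(G)\le\lfloor n/2\rfloor$; moreover, for $k>1$, $B_{R,k}(G)\ge B_{R,k-1}(G)$ and $B'_{R,k}(G)\ge B'_{R,k-1}(G)$. (c) If $\mathrm{diam}(G)\in\{1,2\}$ or $k\ge\mathrm{diam}(G)-1$, then $M_{R,k}(G)=M_R(G)$ and $M'_{R,k}(G)=M'_R(G)$ if $O_R(G)=\mathcal{M}$, and $B_{R,k}(G)=B_R(G)$ and $B'_{R,k}(G)=B'_R(G)$ if $O_R(G)=\mathcal{B}$. (d) If $X$ is a pairing distance-$k$ resolving set of $G$ with $|\bigcup X|=2\dim_k(G)$, then $M_{R,k}(G)=M'_{R,k}(G)=\dim_k(G)$. (e) If $X$ is a quasi-pairing distance-$k$ resolving set of $G$ with $|\bigcup X|=2(\dim_k(G)-1)$ and $O_{R,k}(G)=\mathcal{N}$, then $N_{R,k}(G)=\dim_k(G)$.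
   Context: $d$ is the shortest-path distance, $\mathrm{diam}(G)$ the diameter, and $d_k(x,y)=\min\{d(x,y),k+1\}$. A set $S\subseteq V(G)$ is a distance-$k$ resolving set if for all distinct $x,y$ some $z\in S$ has $d_k(x,z)\ne d_k(y,z)$ (a resolving set if this holds with $d$); $\dim_k(G)$ is the minimum size of a distance-$k$ resolving set. In the Maker-Breaker distance-$k$ resolving game (MB$k$RG), Maker and Breaker alternately select a not-yet-chosen vertex; Maker wins if his selected vertices form a distance-$k$ resolving set, Breaker wins otherwise; in the $M$-game ($B$-game) Maker (Breaker) moves first. $O_{R,k}(G)=\mathcal{M}$ if Maker wins both games, $\mathcal{B}$ if Breaker wins both, $\mathcal{N}$ if the first player wins. The Maker-Breaker resolving game and its outcome $O_R(G)$ are defined the same way with resolving sets. If $O_{R,k}(G)=\mathcal{M}$, $M_{R,k}(G)$ ($M'_{R,k}(G)$) is the minimum number of moves Maker needs to win the $M$-game ($B$-game); if $O_{R,k}(G)=\mathcal{B}$, $B_{R,k}(G)$ ($B'_{R,k}(G)$) is the minimum number of moves Breaker needs to win the $M$-game ($B$-game); if $O_{R,k}(G)=\mathcal{N}$, $N_{R,k}(G)$ is the minimum number of moves for the first player (Maker) to win the $M$-game. $M_R,M'_R,B_R,B'_R$ are defined analogously for the resolving game. For a positive integer $\alpha$ and a family $X=\{\{u_1,w_1\},\dots,\{u_\alpha,w_\alpha\}\}$ of pairwise disjoint 2-subsets of $V(G)$, a transversal is a set $Z$ of size $\alpha$ meeting every $\{u_i,w_i\}$. $X$ is a pairing distance-$k$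 resolving set if every transversal is a distance-$k$ resolving set; $X$ is a quasi-pairing distance-$k$ resolving set if no transversal is a distance-$k$ resolving set but some $v\in V(G)-\bigcup X$ makes $Z\cup\{v\}$ a distance-$k$ resolving set for every transversal $Z$. *)

theory Defs
  imports Main "HOL-Library.Extended_Nat"
begin

definition simple_graph :: "'a set \<Rightarrow> ('a \<Rightarrow> 'a \<Rightarrow> bool) \<Rightarrow> bool" where
  "simple_graph V E \<longleftrightarrow> finite V \<and> (\<forall>x y. E x y \<longrightarrow> x \<in> V \<and> y \<in> V)
     \<and> (\<forall>x y. E x y \<longrightarrow> E y x) \<and> (\<forall>x. \<not> E x x)"

definition edge_rel :: "('a \<Rightarrow> 'a \<Rightarrow> bool) \<Rightarrow> ('a \<times> 'a) set" where
  "edge_rel E = {(u, v). E u v}"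

definition connected_graph :: "'a set \<Rightarrow> ('a \<Rightarrow> 'a \<Rightarrow> bool) \<Rightarrow> bool" where
  "connected_graph V E \<longleftrightarrow> (\<forall>x\<in>V. \<forall>y\<in>V. (x, y) \<in> (edge_rel E)\<^sup>*)"

definition gdist :: "('a \<Rightarrow> 'a \<Rightarrow> bool) \<Rightarrow> 'a \<Rightarrow> 'a \<Rightarrow> nat" where
  "gdist E x y = (LEAST n. (x, y) \<in> edge_rel E ^^ n)"

definition diam :: "'a set \<Rightarrow> ('a \<Rightarrow> 'a \<Rightarrow> bool) \<Rightarrow> nat" where
  "diam V E = Max {gdist E x y | x y. x \<in> V \<and> y \<in> V}"

definition gdist_k :: "('a \<Rightarrow> 'a \<Rightarrow> bool) \<Rightarrow> nat \<Rightarrow> 'a \<Rightarrow> 'a \<Rightarrow> nat" where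
  "gdist_k E k x y = min (gdist E x y) (k + 1)"

definition resolving_wrt :: "('a \<Rightarrow> 'a \<Rightarrow> nat) \<Rightarrow> 'a set \<Rightarrow> 'a set \<Rightarrow> bool" where
  "resolving_wrt d V S \<longleftrightarrow> S \<subseteq> V \<and>
     (\<forall>x\<in>V. \<forall>y\<in>V. x \<noteq> y \<longrightarrow> (\<exists>z\<in>S. d x z \<noteq> d y z))"

definition res_set :: "'a set \<Rightarrow> ('a \<Rightarrow> 'a \<Rightarrow> bool) \<Rightarrow> 'a set \<Rightarrow> bool" where
  "res_set V E S = resolving_wrt (gdist E) V S"

definition res_set_k :: "'a set \<Rightarrow> ('a \<Rightarrow> 'a \<Rightarrow> bool) \<Rightarrow> nat \<Rightarrow> 'a set \<Rightarrow> bool" where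
  "res_set_k V E k S = resolving_wrt (gdist_k E k) V S"

definition dim_k :: "'a set \<Rightarrow> ('a \<Rightarrow> 'a \<Rightarrow> bool) \<Rightarrow> nat \<Rightarrow> nat" where
  "dim_k V E k = Min {card S | S. res_set_k V E k S}"

text \<open>Positions: M = Maker's vertices, B = Breaker's vertices, p = True iff it is
  Maker's turn. The fuel argument n only ensures termination; it is instantiated
  with card V, which is the maximal number of remaining moves.\<close>
primrec maker_wins_from ::
  "('a set \<Rightarrow> bool) \<Rightarrow> 'a set \<Rightarrow> nat \<Rightarrow> 'a set \<Rightarrow> 'a set \<Rightarrow> bool \<Rightarrow> bool" where
  "maker_wins_from W V 0 M B p = W M"
| "maker_wins_from W V (Suc n) M B p =
    (if V - (M \<union> B) = {} then W M
     else if p then (\<exists>v \<in> V - (M \<union> B). maker_wins_from W V n (insert v M) B False)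
     else (\<forall>v \<in> V - (M \<union> B). maker_wins_from W V n M (insert v B) True))"

text \<open>Maker wins the game (M-game if maker_first, B-game otherwise).\<close>
definition maker_wins :: "('a set \<Rightarrow> bool) \<Rightarrow> 'a set \<Rightarrow> bool \<Rightarrow> bool" where
  "maker_wins W V maker_first = maker_wins_from W V (card V) {} {} maker_first"

datatype outcome = OutM | OutB | OutN | OutP

text \<open>Outcome: M (Maker wins both games), B (Breaker wins both), N (first player
  wins), P (second player wins; never happens for these games).\<close>
definition game_outcome :: "('a set \<Rightarrow> bool) \<Rightarrow> 'a set \<Rightarrow> outcome" where
  "game_outcome W V =
    (if maker_wins W V True \<and> maker_wins W V False then OutM
     else if \<not> maker_wins W V True \<and> \<not> maker_wins W V False then OutB
     else if maker_wins W V True then OutN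
     else OutP)"

primrec maker_time ::
  "('a set \<Rightarrow> bool) \<Rightarrow> 'a set \<Rightarrow> nat \<Rightarrow> 'a set \<Rightarrow> 'a set \<Rightarrow> bool \<Rightarrow> enat" where
  "maker_time W V 0 M B p = (if W M then enat (card M) else \<infinity>)"
| "maker_time W V (Suc n) M B p =
    (if W M then enat (card M)
     else if V - (M \<union> B) = {} then \<infinity>
     else if p then Min ((\<lambda>v. maker_time W V n (insert v M) B False) ` (V - (M \<union> B)))
     else Max ((\<lambda>v. maker_time W V n M (insert v B) True) ` (V - (M \<union> B))))"

text \<open>Optimal number of Breaker moves until Breaker has won, i.e. until no
  completion of Maker's set can satisfy W (for monotone W: the set V - B of
  vertices not taken by Breaker fails W).\<close>
primrec breaker_time ::
  "('a set \<Rightarrow> bool) \<Rightarrow> 'a set \<Rightarrow> nat \<Rightarrow> 'a set \<Rightarrow> 'a set \<Rightarrow> bool \<Rightarrow> enat" where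
  "breaker_time W V 0 M B p = (if \<not> W (V - B) then enat (card B) else \<infinity>)"
| "breaker_time W V (Suc n) M B p =
    (if \<not> W (V - B) then enat (card B)
     else if V - (M \<union> B) = {} then \<infinity>
     else if p then Max ((\<lambda>v. breaker_time W V n (insert v M) B False) ` (V - (M \<union> B)))
     else Min ((\<lambda>v. breaker_time W V n M (insert v B) True) ` (V - (M \<union> B))))"

text \<open>M_W: Maker first (M-game); M'_W: Breaker first (B-game). Likewise for B.
  N_W (first player Maker wins the M-game) coincides with M_W.\<close>
definition M_val :: "('a set \<Rightarrow> bool) \<Rightarrow> 'a set \<Rightarrow> enat" where
  "M_val W V = maker_time W V (card V) {} {} True"
definition M'_val :: "('a set \<Rightarrow> bool) \<Rightarrow> 'a set \<Rightarrow> enat" where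
  "M'_val W V = maker_time W V (card V) {} {} False"
definition B_val :: "('a set \<Rightarrow> bool) \<Rightarrow> 'a set \<Rightarrow> enat" where
  "B_val W V = breaker_time W V (card V) {} {} True"
definition B'_val :: "('a set \<Rightarrow> bool) \<Rightarrow> 'a set \<Rightarrow> enat" where
  "B'_val W V = breaker_time W V (card V) {} {} False"
definition N_val :: "('a set \<Rightarrow> bool) \<Rightarrow> 'a set \<Rightarrow> enat" where
  "N_val W V = maker_time W V (card V) {} {} True"

definition pair_family :: "'a set \<Rightarrow> 'a set set \<Rightarrow> bool" where
  "pair_family V X \<longleftrightarrow> finite X \<and> card X \<ge> 1 \<and> (\<forall>p\<in>X. p \<subseteq> V \<and> card p = 2)
     \<and> (\<forall>p\<in>X. \<forall>q\<in>X. p \<noteq> q \<longrightarrow> p \<inter> q = {})"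

definition transversal :: "'a set set \<Rightarrow> 'a set \<Rightarrow> bool" where
  "transversal X Z \<longleftrightarrow> card Z = card X \<and> (\<forall>p\<in>X. Z \<inter> p \<noteq> {})"

definition pairing_res :: "'a set \<Rightarrow> ('a \<Rightarrow> 'a \<Rightarrow> bool) \<Rightarrow> nat \<Rightarrow> 'a set set \<Rightarrow> bool" where
  "pairing_res V E k X \<longleftrightarrow> pair_family V X \<and>
     (\<forall>Z. Z \<subseteq> V \<and> transversal X Z \<longrightarrow> res_set_k V E k Z)"

definition quasi_pairing_res :: "'a set \<Rightarrow> ('a \<Rightarrow> 'a \<Rightarrow> bool) \<Rightarrow> nat \<Rightarrow> 'a set set \<Rightarrow> bool" where
  "quasi_pairing_res V E k X \<longleftrightarrow> pair_family V X \<and>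
     (\<forall>Z. Z \<subseteq> V \<and> transversal X Z \<longrightarrow> \<not> res_set_k V E k Z) \<and>
     (\<exists>v \<in> V - \<Union>X. \<forall>Z. Z \<subseteq> V \<and> transversal X Z \<longrightarrow> res_set_k V E k (insert v Z))"

end

theory Submission
  imports Defs
begin



lemma card_free_ins:
  assumes "finite V" "v \<in> V - (M \<union> B)"
  shows "card (V - (insert v M \<union> B)) = card (V - (M \<union> B)) - 1"
    "card (V - (M \<union> insert v B)) = card (V - (M \<union> B)) - 1"
proof -
  have "V - (insert v M \<union> B) = (V - (M \<union> B)) - {v}" "V - (M \<union> insert v B) = (V - (M \<union> B)) - {v}" by auto
  thus "card (V - (insert v M \<union> B)) = card (V - (M \<union> B)) - 1"
    "card (V - (M \<union> insert v B)) = card (V - (M \<union> B)) - 1" using assms by (simp_all add: card_Diff_singleton)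
qed

lemma card_free_le:
  assumes "finite V" "v \<in> V - (M \<union> B)" "card (V - (M \<union> B)) \<le> Suc n"
  shows "card (V - (insert v M \<union> B)) \<le> n" "card (V - (M \<union> insert v B)) \<le> n"
  using card_free_ins[OF assms(1,2)] assms(3) by auto

lemma free_empty0:
  assumes "finite V" "card (V - (M \<union> B)) \<le> 0" shows "V - (M \<union> B) = {}"
  using assms by simp

lemma mt_Suc:
  assumes "finite V"
  shows "card (V - (M \<union> B)) \<le> n \<Longrightarrow> maker_time W V (Suc n) M B p = maker_time W V n M B p"
proof (induction n arbitrary: M B p)
  case 0
  hence "V - (M \<union> B) = {}" using assms by simp
  thus ?case by simp
next
  case (Suc n)
  have e1: "(\<lambda>v. maker_time W V (Suc n) (insert v M) B False) ` (V - (M \<union> B))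
     = (\<lambda>v. maker_time W V n (insert v M) B False) ` (V - (M \<union> B))"
    using Suc.IH card_free_le[OF assms _ Suc.prems] by (intro image_cong) auto
  have e2: "(\<lambda>v. maker_time W V (Suc n) M (insert v B) True) ` (V - (M \<union> B))
     = (\<lambda>v. maker_time W V n M (insert v B) True) ` (V - (M \<union> B))"
    using Suc.IH card_free_le[OF assms _ Suc.prems] by (intro image_cong) auto
  show ?case unfolding maker_time.simps(2)[of W V "Suc n" M B p] maker_time.simps(2)[of W V n M B p] e1 e2 ..
qed

lemma mt_fuel:
  assumes "finite V"
  shows "card (V - (M \<union> B)) \<le> n \<Longrightarrow> maker_time W V n M B p = maker_time W V (card (V - (M \<union> B))) M B p"
proof (induction n)
  case 0 thus ?case by simp
next
  case (Suc n)
  show ?case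
  proof (cases "card (V - (M \<union> B)) \<le> n")
    case True thus ?thesis using Suc mt_Suc[OF assms] by simp
  next
    case False thus ?thesis using Suc.prems by (metis le_antisym not_less_eq_eq)
  qed
qed

lemma bt_Suc:
  assumes "finite V"
  shows "card (V - (M \<union> B)) \<le> n \<Longrightarrow> breaker_time W V (Suc n) M B p = breaker_time W V n M B p"
proof (induction n arbitrary: M B p)
  case 0
  hence "V - (M \<union> B) = {}" using assms by simp
  thus ?case by simp
next
  case (Suc n)
  have e1: "(\<lambda>v. breaker_time W V (Suc n) (insert v M) B False) ` (V - (M \<union> B))
     = (\<lambda>v. breaker_time W V n (insert v M) B False) ` (V - (M \<union> B))"
    using Suc.IH card_free_le[OF assms _ Suc.prems] by (intro image_cong) auto
  have e2: "(\<lambda>v. breaker_time W V (Suc n) M (insert v B) True) ` (V - (M \<union> B))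
     = (\<lambda>v. breaker_time W V n M (insert v B) True) ` (V - (M \<union> B))"
    using Suc.IH card_free_le[OF assms _ Suc.prems] by (intro image_cong) auto
  show ?case unfolding breaker_time.simps(2)[of W V "Suc n" M B p] breaker_time.simps(2)[of W V n M B p] e1 e2 ..
qed

lemma bt_fuel:
  assumes "finite V"
  shows "card (V - (M \<union> B)) \<le> n \<Longrightarrow> breaker_time W V n M B p = breaker_time W V (card (V - (M \<union> B))) M B p"
proof (induction n)
  case 0 thus ?case by simp
next
  case (Suc n)
  show ?case
  proof (cases "card (V - (M \<union> B)) \<le> n")
    case True thus ?thesis using Suc bt_Suc[OF assms] by simp
  next
    case False thus ?thesis using Suc.prems by (metis le_antisym not_less_eq_eq)
  qed
qed




lemma Min_img_le:
  fixes f g :: "'b \<Rightarrow> enat"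
  assumes "finite A" "A' \<subseteq> A" "A' \<noteq> {}" "\<And>v. v \<in> A' \<Longrightarrow> f v \<le> g v"
  shows "Min (f ` A) \<le> Min (g ` A')"
proof -
  have fA': "finite A'" using assms finite_subset by blast
  have "Min (g ` A') \<in> g ` A'" using fA' assms(3) by (intro Min_in) auto
  then obtain v where v: "v \<in> A'" "Min (g ` A') = g v" by auto
  have "Min (f ` A) \<le> f v" using assms v by (intro Min_le) auto
  thus ?thesis using v assms(4)[OF v(1)] by (metis order.trans)
qed

lemma Max_img_le:
  fixes f g :: "'b \<Rightarrow> enat"
  assumes "finite A'" "A \<noteq> {}" "\<And>v. v \<in> A \<Longrightarrow> \<exists>w\<in>A'. f v \<le> g w" "finite A"
  shows "Max (f ` A) \<le> Max (g ` A')"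
proof -
  show ?thesis
  proof (subst Max_le_iff)
    show "\<forall>a\<in>f ` A. a \<le> Max (g ` A')"
    proof
      fix a assume "a \<in> f ` A"
      then obtain v where v: "v \<in> A" "a = f v" by auto
      then obtain w where w: "w \<in> A'" "f v \<le> g w" using assms(3) by blast
      have "g w \<le> Max (g ` A')" using w assms(1) by (intro Max_ge) auto
      thus "a \<le> Max (g ` A')" using v w by auto
    qed
  qed (use assms in auto)
qed

lemma mt_mono_B:
  assumes "finite V"
  shows "card (V - (M \<union> B)) \<le> n \<Longrightarrow> B \<subseteq> B' \<Longrightarrow> maker_time W V n M B p \<le> maker_time W V n M B' p"
proof (induction n arbitrary: M B B' p)
  case 0
  hence "V - (M \<union> B) = {}" "V - (M \<union> B') = {}" using assms by auto
  thus ?case by simp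
next
  case (Suc n)
  show ?case
  proof (cases "W M")
    case True thus ?thesis by simp
  next
    case nW: False
    show ?thesis
    proof (cases "V - (M \<union> B') = {}")
      case True thus ?thesis using nW by simp
    next
      case ne: False
      have sub: "V - (M \<union> B') \<subseteq> V - (M \<union> B)" using Suc.prems by auto
      hence ne2: "V - (M \<union> B) \<noteq> {}" using ne by auto
      show ?thesis
      proof (cases p)
        case True
        have "Min ((\<lambda>v. maker_time W V n (insert v M) B False) ` (V - (M \<union> B)))
            \<le> Min ((\<lambda>v. maker_time W V n (insert v M) B' False) ` (V - (M \<union> B')))"
          using sub ne assms Suc.prems card_free_le[OF assms _ Suc.prems(1)]
          by (intro Min_img_le Suc.IH) auto
        thus ?thesis using True nW ne ne2 by simp
      next
        case False
        have "Max ((\<lambda>v. maker_time W V n M (insert v B) True) ` (V - (M \<union> B)))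
            \<le> Max ((\<lambda>v. maker_time W V n M (insert v B') True) ` (V - (M \<union> B')))"
        proof (rule Max_img_le)
          fix v assume v: "v \<in> V - (M \<union> B)"
          have c: "card (V - (M \<union> insert v B)) \<le> n" using card_free_le[OF assms v Suc.prems(1)] by simp
          show "\<exists>w\<in>V - (M \<union> B'). maker_time W V n M (insert v B) True \<le> maker_time W V n M (insert w B') True"
          proof (cases "v \<in> B'")
            case False
            hence vv: "v \<in> V - (M \<union> B')" using v by auto
            have "insert v B \<subseteq> insert v B'" using Suc.prems by auto
            from Suc.IH[OF c this] show ?thesis using vv by (intro bexI[of _ v])
          next
            case True
            obtain w where ww: "w \<in> V - (M \<union> B')" using ne by auto
            have "insert v B \<subseteq> insert w B'" using Suc.prems True by auto
            from Suc.IH[OF c this] show ?thesis using ww by (intro bexI[of _ w])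
          qed
        qed (use assms ne2 in auto)
        thus ?thesis using False nW ne ne2 by simp
      qed
    qed
  qed
qed

lemma bt_mono_M:
  assumes "finite V"
  shows "card (V - (M \<union> B)) \<le> n \<Longrightarrow> M \<subseteq> M' \<Longrightarrow> breaker_time W V n M B p \<le> breaker_time W V n M' B p"
proof (induction n arbitrary: M M' B p)
  case 0
  hence "V - (M \<union> B) = {}" "V - (M' \<union> B) = {}" using assms by auto
  thus ?case by simp
next
  case (Suc n)
  show ?case
  proof (cases "W (V - B)")
    case False thus ?thesis by simp
  next
    case nW: True
    show ?thesis
    proof (cases "V - (M' \<union> B) = {}")
      case True thus ?thesis using nW by simp
    next
      case ne: False
      have sub: "V - (M' \<union> B) \<subseteq> V - (M \<union> B)" using Suc.prems by auto
      hence ne2: "V - (M \<union> B) \<noteq> {}" using ne by auto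
      show ?thesis
      proof (cases p)
        case False
        have "Min ((\<lambda>v. breaker_time W V n M (insert v B) True) ` (V - (M \<union> B)))
            \<le> Min ((\<lambda>v. breaker_time W V n M' (insert v B) True) ` (V - (M' \<union> B)))"
        proof (rule Min_img_le)
          fix v assume v: "v \<in> V - (M' \<union> B)"
          hence v': "v \<in> V - (M \<union> B)" using sub by auto
          have c: "card (V - (M \<union> insert v B)) \<le> n" by (rule card_free_le(2)[OF assms v' Suc.prems(1)])
          show "breaker_time W V n M (insert v B) True \<le> breaker_time W V n M' (insert v B) True"
            using Suc.IH[OF c] Suc.prems(2) by blast
        qed (use assms sub ne in auto)
        thus ?thesis using False nW ne ne2 by simp
      next
        case True
        have "Max ((\<lambda>v. breaker_time W V n (insert v M) B False) ` (V - (M \<union> B)))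
            \<le> Max ((\<lambda>v. breaker_time W V n (insert v M') B False) ` (V - (M' \<union> B)))"
        proof (rule Max_img_le)
          fix v assume v: "v \<in> V - (M \<union> B)"
          have c: "card (V - (insert v M \<union> B)) \<le> n" using card_free_le[OF assms v Suc.prems(1)] by simp
          show "\<exists>w\<in>V - (M' \<union> B). breaker_time W V n (insert v M) B False \<le> breaker_time W V n (insert w M') B False"
          proof (cases "v \<in> M'")
            case False
            hence vv: "v \<in> V - (M' \<union> B)" using v by auto
            have "insert v M \<subseteq> insert v M'" using Suc.prems by auto
            from Suc.IH[OF c this] show ?thesis using vv by (intro bexI[of _ v])
          next
            case True
            obtain w where ww: "w \<in> V - (M' \<union> B)" using ne by auto
            have "insert v M \<subseteq> insert w M'" using Suc.prems True by auto
            from Suc.IH[OF c this] show ?thesis using ww by (intro bexI[of _ w])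
          qed
        qed (use assms ne2 in auto)
        thus ?thesis using True nW ne ne2 by simp
      qed
    qed
  qed
qed

lemma M_le_M':
  assumes "finite V"
  shows "M_val W V \<le> M'_val W V"
proof (cases "W {}")
  case True thus ?thesis unfolding M_val_def M'_val_def by (cases "card V") auto
next
  case nW: False
  show ?thesis
  proof (cases "V = {}")
    case True thus ?thesis unfolding M_val_def M'_val_def by simp
  next
    case ne: False
    then obtain n where n: "card V = Suc n" using assms by (cases "card V") auto
    obtain y where y: "y \<in> V" using ne by auto
    have c: "card (V - ({} \<union> {y})) = n" using y n assms by (simp add: card_Diff_singleton)
    have "maker_time W V (card V) {} {} True \<le> maker_time W V (card V) {} {y} True"
      using assms by (intro mt_mono_B) auto
    also have "\<dots> = maker_time W V n {} {y} True"
      unfolding n by (rule mt_Suc[OF assms]) (use c in simp)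
    also have "\<dots> \<le> Max ((\<lambda>v. maker_time W V n {} (insert v {}) True) ` (V - ({} \<union> {})))"
      using y assms by (intro Max_ge) auto
    also have "\<dots> = M'_val W V" unfolding M'_val_def n using nW ne by simp
    finally show ?thesis unfolding M_val_def .
  qed
qed

lemma B'_le_B:
  assumes "finite V"
  shows "B'_val W V \<le> B_val W V"
proof (cases "W V")
  case False thus ?thesis unfolding B_val_def B'_val_def by (cases "card V") auto
next
  case nW: True
  show ?thesis
  proof (cases "V = {}")
    case True thus ?thesis unfolding B_val_def B'_val_def by simp
  next
    case ne: False
    then obtain n where n: "card V = Suc n" using assms by (cases "card V") auto
    obtain y where y: "y \<in> V" using ne by auto
    have c: "card (V - ({y} \<union> {})) = n" using y n assms by (simp add: card_Diff_singleton)
    have "breaker_time W V (card V) {} {} False \<le> breaker_time W V (card V) {y} {} False"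
      using assms by (intro bt_mono_M) auto
    also have "\<dots> = breaker_time W V n {y} {} False"
      unfolding n by (rule bt_Suc[OF assms]) (use c in simp)
    also have "\<dots> \<le> Max ((\<lambda>v. breaker_time W V n (insert v {}) {} False) ` (V - ({} \<union> {})))"
      using y assms by (intro Max_ge) auto
    also have "\<dots> = B_val W V" unfolding B_val_def n using nW ne by simp
    finally show ?thesis unfolding B'_val_def .
  qed
qed




lemma Min_img_ge:
  fixes f :: "'b \<Rightarrow> enat"
  assumes "finite A" "A \<noteq> {}" "\<And>v. v \<in> A \<Longrightarrow> d \<le> f v"
  shows "d \<le> Min (f ` A)"
  using assms by (subst Min_ge_iff) auto

lemma Max_img_ge:
  fixes f :: "'b \<Rightarrow> enat"
  assumes "finite A" "v \<in> A" "d \<le> f v"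
  shows "d \<le> Max (f ` A)"
  using assms by (meson Max_ge finite_imageI image_eqI order.trans)

lemma Max_img_le':
  fixes f :: "'b \<Rightarrow> enat"
  assumes "finite A" "A \<noteq> {}" "\<And>v. v \<in> A \<Longrightarrow> f v \<le> d"
  shows "Max (f ` A) \<le> d"
  using assms by (subst Max_le_iff) auto

lemma Min_img_le':
  fixes f :: "'b \<Rightarrow> enat"
  assumes "finite A" "v \<in> A" "f v \<le> d"
  shows "Min (f ` A) \<le> d"
  using assms by (meson Min_le finite_imageI image_eqI order.trans)

lemma mt_lower:
  assumes "finite V" "\<And>S. W S \<Longrightarrow> d \<le> card S"
  shows "enat d \<le> maker_time W V n M B p"
proof (induction n arbitrary: M B p)
  case 0 thus ?case using assms(2) by simp
next
  case (Suc n)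
  have fin: "finite (V - (M \<union> B))" using assms by simp
  show ?case
  proof (cases "W M \<or> V - (M \<union> B) = {}")
    case True thus ?thesis using assms(2) by auto
  next
    case False
    thus ?thesis using fin Suc.IH by (cases p) (auto intro!: Min_img_ge Max_img_ge)
  qed
qed

lemma mt_ge_card:
  assumes "finite V" "finite M"
  shows "enat (card M) \<le> maker_time W V n M B p"
  using assms(2)
proof (induction n arbitrary: M B p)
  case 0 thus ?case by simp
next
  case (Suc n)
  have fin: "finite (V - (M \<union> B))" using assms by simp
  show ?case
  proof (cases "W M \<or> V - (M \<union> B) = {}")
    case True thus ?thesis by auto
  next
    case False
    have a: "enat (card M) \<le> maker_time W V n (insert v M) B q" for v q
      using Suc.IH[of "insert v M"] Suc.prems card_mono[of "insert v M" M]
      by (meson card_insert_le enat_ord_simps(1) finite_insert order.trans)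
    have b: "enat (card M) \<le> maker_time W V n M (insert v B) q" for v q
      using Suc.IH Suc.prems by blast
    show ?thesis using False fin a b by (cases p) (auto intro!: Min_img_ge Max_img_ge)
  qed
qed

lemma bt_ge_card:
  assumes "finite V" "finite B"
  shows "enat (card B) \<le> breaker_time W V n M B p"
  using assms(2)
proof (induction n arbitrary: M B p)
  case 0 thus ?case by simp
next
  case (Suc n)
  have fin: "finite (V - (M \<union> B))" using assms by simp
  show ?case
  proof (cases "\<not> W (V - B) \<or> V - (M \<union> B) = {}")
    case True thus ?thesis by auto
  next
    case False
    have a: "enat (card B) \<le> breaker_time W V n M (insert v B) q" for v q
      using Suc.IH[of "insert v B"] Suc.prems
      by (meson card_insert_le enat_ord_simps(1) finite_insert order.trans)
    have b: "enat (card B) \<le> breaker_time W V n (insert v M) B q" for v q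
      using Suc.IH Suc.prems by blast
    show ?thesis using False fin a b by (cases p) (auto intro!: Min_img_ge Max_img_ge)
  qed
qed

lemma mt_W_mono:
  assumes "finite V" "finite M" "\<And>S. W S \<Longrightarrow> W' S"
  shows "maker_time W' V n M B p \<le> maker_time W V n M B p"
  using assms(2)
proof (induction n arbitrary: M B p)
  case 0 thus ?case using assms(3) by simp
next
  case (Suc n)
  have fin: "finite (V - (M \<union> B))" using assms by simp
  show ?case
  proof (cases "W' M")
    case True thus ?thesis using mt_ge_card[OF assms(1) Suc.prems, of W "Suc n" B p] by simp
  next
    case False
    hence nW: "\<not> W M" using assms(3) by blast
    show ?thesis
    proof (cases "V - (M \<union> B) = {}")
      case True thus ?thesis using False nW by simp
    next
      case ne: False
      show ?thesis
      proof (cases p)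
        case True
        have "Min ((\<lambda>v. maker_time W' V n (insert v M) B False) ` (V - (M \<union> B)))
          \<le> Min ((\<lambda>v. maker_time W V n (insert v M) B False) ` (V - (M \<union> B)))"
          using fin ne Suc.IH Suc.prems by (intro Min_img_le) auto
        thus ?thesis using True False nW ne by simp
      next
        case f: False
        have "Max ((\<lambda>v. maker_time W' V n M (insert v B) True) ` (V - (M \<union> B)))
          \<le> Max ((\<lambda>v. maker_time W V n M (insert v B) True) ` (V - (M \<union> B)))"
          using fin ne Suc.IH Suc.prems by (intro Max_img_le) auto
        thus ?thesis using f False nW ne by simp
      qed
    qed
  qed
qed

lemma bt_W_mono:
  assumes "finite V" "finite B" "\<And>S. W S \<Longrightarrow> W' S"
  shows "breaker_time W V n M B p \<le> breaker_time W' V n M B p"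
  using assms(2)
proof (induction n arbitrary: M B p)
  case 0 thus ?case using assms(3) by simp
next
  case (Suc n)
  have fin: "finite (V - (M \<union> B))" using assms by simp
  show ?case
  proof (cases "W (V - B)")
    case False thus ?thesis using bt_ge_card[OF assms(1) Suc.prems, of W' "Suc n" M p] by simp
  next
    case True
    hence nW: "W' (V - B)" using assms(3) by blast
    show ?thesis
    proof (cases "V - (M \<union> B) = {}")
      case e: True thus ?thesis using True nW by simp
    next
      case ne: False
      show ?thesis
      proof (cases p)
        case f: True
        have "Max ((\<lambda>v. breaker_time W V n (insert v M) B False) ` (V - (M \<union> B)))
          \<le> Max ((\<lambda>v. breaker_time W' V n (insert v M) B False) ` (V - (M \<union> B)))"
          using fin ne Suc.IH Suc.prems by (intro Max_img_le) auto
        thus ?thesis using f True nW ne by simp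
      next
        case f: False
        have "Min ((\<lambda>v. breaker_time W V n M (insert v B) True) ` (V - (M \<union> B)))
          \<le> Min ((\<lambda>v. breaker_time W' V n M (insert v B) True) ` (V - (M \<union> B)))"
          using fin ne Suc.IH Suc.prems by (intro Min_img_le) auto
        thus ?thesis using f True nW ne by simp
      qed
    qed
  qed
qed

lemma mt_win:
  assumes "finite V"
  shows "finite M \<Longrightarrow> card (V - (M \<union> B)) \<le> n \<Longrightarrow> maker_wins_from W V n M B p \<Longrightarrow>
    maker_time W V n M B p \<le> enat (card M + (if p then (card (V - (M \<union> B)) + 1) div 2 else card (V - (M \<union> B)) div 2))"
proof (induction n arbitrary: M B p)
  case 0 thus ?case by simp
next
  case (Suc n)
  define c where "c = card (V - (M \<union> B))"
  have fin: "finite (V - (M \<union> B))" using assms by simp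
  show ?case
  proof (cases "W M")
    case True thus ?thesis by simp
  next
    case nW: False
    have ne: "V - (M \<union> B) \<noteq> {}" using Suc.prems nW by (auto split: if_splits)
    hence c1: "c \<ge> 1" using fin unfolding c_def by (simp add: Suc_leI card_gt_0_iff)
    show ?thesis
    proof (cases p)
      case True
      then obtain v where v: "v \<in> V - (M \<union> B)" and w: "maker_wins_from W V n (insert v M) B False"
        using Suc.prems nW ne by auto
      have cv: "card (V - (insert v M \<union> B)) = c - 1" using card_free_ins[OF assms v] c_def by simp
      have "maker_time W V n (insert v M) B False \<le> enat (card (insert v M) + (c - 1) div 2)"
        using Suc.IH[of "insert v M" B False] Suc.prems w cv card_free_le[OF assms v Suc.prems(2)] by simp
      also have "\<dots> = enat (card M + (c + 1) div 2)" using v Suc.prems c1 by simp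
      finally have "Min ((\<lambda>v. maker_time W V n (insert v M) B False) ` (V - (M \<union> B))) \<le> enat (card M + (c + 1) div 2)"
        using fin v by (intro Min_img_le')
      thus ?thesis using True nW ne c_def by simp
    next
      case False
      have "Max ((\<lambda>v. maker_time W V n M (insert v B) True) ` (V - (M \<union> B))) \<le> enat (card M + c div 2)"
      proof (rule Max_img_le'[OF fin ne])
        fix v assume v: "v \<in> V - (M \<union> B)"
        have w: "maker_wins_from W V n M (insert v B) True" using Suc.prems nW ne False v by auto
        have cv: "card (V - (M \<union> insert v B)) = c - 1" using card_free_ins[OF assms v] c_def by simp
        have "maker_time W V n M (insert v B) True \<le> enat (card M + (c - 1 + 1) div 2)"
          using Suc.IH[of M "insert v B" True] Suc.prems w cv card_free_le[OF assms v Suc.prems(2)] by simp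
        also have "\<dots> = enat (card M + c div 2)" using c1 by simp
        finally show "maker_time W V n M (insert v B) True \<le> enat (card M + c div 2)" .
      qed
      thus ?thesis using False nW ne c_def by simp
    qed
  qed
qed

lemma bt_lose:
  assumes "finite V" and mono: "\<And>S S'. W S \<Longrightarrow> S \<subseteq> S' \<Longrightarrow> S' \<subseteq> V \<Longrightarrow> W S'"
  shows "finite B \<Longrightarrow> M \<subseteq> V \<Longrightarrow> card (V - (M \<union> B)) \<le> n \<Longrightarrow> \<not> maker_wins_from W V n M B p \<Longrightarrow>
    breaker_time W V n M B p \<le> enat (card B + (if p then card (V - (M \<union> B)) div 2 else (card (V - (M \<union> B)) + 1) div 2))"
proof (induction n arbitrary: M B p)
  case 0
  hence "V - (M \<union> B) = {}" using assms by simp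
  hence "V - B \<subseteq> M" by auto
  thus ?case using 0 mono[of "V - B" M] by auto
next
  case (Suc n)
  define c where "c = card (V - (M \<union> B))"
  have fin: "finite (V - (M \<union> B))" using assms by simp
  show ?case
  proof (cases "W (V - B)")
    case False thus ?thesis by simp
  next
    case nW: True
    have ne: "V - (M \<union> B) \<noteq> {}"
    proof
      assume e: "V - (M \<union> B) = {}"
      hence "V - B \<subseteq> M" by auto
      hence "W M" using mono[of "V - B" M] nW Suc.prems by auto
      thus False using Suc.prems e by simp
    qed
    hence c1: "c \<ge> 1" using fin unfolding c_def by (simp add: Suc_leI card_gt_0_iff)
    show ?thesis
    proof (cases p)
      case False
      then obtain v where v: "v \<in> V - (M \<union> B)" and w: "\<not> maker_wins_from W V n M (insert v B) True"
        using Suc.prems ne by (auto split: if_splits)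
      have cv: "card (V - (M \<union> insert v B)) = c - 1" using card_free_ins[OF assms(1) v] c_def by simp
      have "breaker_time W V n M (insert v B) True \<le> enat (card (insert v B) + (c - 1) div 2)"
        using Suc.IH[of "insert v B" M True] Suc.prems w cv card_free_le[OF assms(1) v Suc.prems(3)] by simp
      also have "\<dots> = enat (card B + (c + 1) div 2)" using v Suc.prems c1 by simp
      finally have "Min ((\<lambda>v. breaker_time W V n M (insert v B) True) ` (V - (M \<union> B))) \<le> enat (card B + (c + 1) div 2)"
        using fin v by (intro Min_img_le')
      thus ?thesis using False nW ne c_def by simp
    next
      case True
      have "Max ((\<lambda>v. breaker_time W V n (insert v M) B False) ` (V - (M \<union> B))) \<le> enat (card B + c div 2)"
      proof (rule Max_img_le'[OF fin ne])
        fix v assume v: "v \<in> V - (M \<union> B)"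
        have w: "\<not> maker_wins_from W V n (insert v M) B False" using Suc.prems ne True v by (auto split: if_splits)
        have cv: "card (V - (insert v M \<union> B)) = c - 1" using card_free_ins[OF assms(1) v] c_def by simp
        have "breaker_time W V n (insert v M) B False \<le> enat (card B + (c - 1 + 1) div 2)"
          using Suc.IH[of B "insert v M" False] Suc.prems w cv card_free_le[OF assms(1) v Suc.prems(3)] v by simp
        also have "\<dots> = enat (card B + c div 2)" using c1 by simp
        finally show "breaker_time W V n (insert v M) B False \<le> enat (card B + c div 2)" .
      qed
      thus ?thesis using True nW ne c_def by simp
    qed
  qed
qed




lemma mt_W: "W M \<Longrightarrow> maker_time W V n M B p = enat (card M)"
  by (cases n) auto

lemma pf_facts:
  assumes "pair_family V X"
  shows "finite X" "\<And>P. P \<in> X \<Longrightarrow> P \<subseteq> V" "\<And>P. P \<in> X \<Longrightarrow> card P = 2"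
    "\<And>P Q. P \<in> X \<Longrightarrow> Q \<in> X \<Longrightarrow> P \<noteq> Q \<Longrightarrow> P \<inter> Q = {}"
  using assms unfolding pair_family_def by auto

lemma two_other: "card P = 2 \<Longrightarrow> \<exists>v\<in>P. v \<noteq> y"
  by (auto simp: card_2_iff)

lemma two_ne: "card P = 2 \<Longrightarrow> \<exists>v. v \<in> P"
  by (auto simp: card_2_iff)

lemma pair_done:
  assumes H: "\<And>M'. M0 \<subseteq> M' \<Longrightarrow> M' \<subseteq> V \<Longrightarrow> (\<forall>P\<in>X. P \<inter> M' \<noteq> {}) \<Longrightarrow> W M'"
  shows "M0 \<subseteq> M \<Longrightarrow> M \<subseteq> V \<Longrightarrow> \<not> (\<exists>P\<in>X. P \<inter> M = {}) \<Longrightarrow> maker_time W V n M B p \<le> enat (card M + card {P\<in>X. P \<inter> M = {}})"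
  using H[of M] by (simp add: mt_W)

lemma pairing_strategy:
  assumes finV: "finite V" and pf: "pair_family V X"
    and H: "\<And>M'. M0 \<subseteq> M' \<Longrightarrow> M' \<subseteq> V \<Longrightarrow> (\<forall>P\<in>X. P \<inter> M' \<noteq> {}) \<Longrightarrow> W M'"
  shows "M0 \<subseteq> M \<Longrightarrow> M \<subseteq> V \<Longrightarrow> card (V - (M \<union> B)) \<le> n \<Longrightarrow>
    ((\<forall>P\<in>X. P \<inter> M = {} \<longrightarrow> P \<inter> B = {}) \<longrightarrow>
       maker_time W V n M B False \<le> enat (card M + card {P\<in>X. P \<inter> M = {}}))
  \<and> (((\<exists>P\<in>X. P \<inter> M = {}) \<longrightarrow> (\<exists>P0\<in>X. P0 \<inter> M = {} \<and> (\<exists>v\<in>P0. v \<notin> B) \<and> (\<forall>P\<in>X. P \<inter> M = {} \<longrightarrow> P \<noteq> P0 \<longrightarrow> P \<inter> B = {}))) \<longrightarrow>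
       maker_time W V n M B True \<le> enat (card M + card {P\<in>X. P \<inter> M = {}}))"
proof (induction n arbitrary: M B)
    case 0
    hence e: "V - (M \<union> B) = {}" using finV by simp
    show ?case
    proof (intro conjI impI)
      assume IF: "\<forall>P\<in>X. P \<inter> M = {} \<longrightarrow> P \<inter> B = {}"
      show "maker_time W V 0 M B False \<le> enat (card M + card {P\<in>X. P \<inter> M = {}})"
      proof (cases "\<exists>P\<in>X. P \<inter> M = {}")
        case True
        then obtain P where P: "P \<in> X" "P \<inter> M = {}" by blast
        obtain x where "x \<in> P" using two_ne[OF pf_facts(3)[OF pf P(1)]] by blast
        hence "x \<in> V - (M \<union> B)" using P IF pf_facts(2)[OF pf P(1)] by blast
        thus ?thesis using e by simp
      next case False show ?thesis by (rule pair_done[OF H]) (use 0 False in auto)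
      qed
    next
      assume IT: "(\<exists>P\<in>X. P \<inter> M = {}) \<longrightarrow> (\<exists>P0\<in>X. P0 \<inter> M = {} \<and> (\<exists>v\<in>P0. v \<notin> B) \<and> (\<forall>P\<in>X. P \<inter> M = {} \<longrightarrow> P \<noteq> P0 \<longrightarrow> P \<inter> B = {}))"
      show "maker_time W V 0 M B True \<le> enat (card M + card {P\<in>X. P \<inter> M = {}})"
      proof (cases "\<exists>P\<in>X. P \<inter> M = {}")
        case True
        with IT have "\<exists>P0\<in>X. P0 \<inter> M = {} \<and> (\<exists>v\<in>P0. v \<notin> B) \<and> (\<forall>P\<in>X. P \<inter> M = {} \<longrightarrow> P \<noteq> P0 \<longrightarrow> P \<inter> B = {})" by (rule mp)
        then obtain P0 v where "P0 \<in> X" "P0 \<inter> M = {}" "v \<in> P0" "v \<notin> B" by (elim bexE conjE) (rule that; assumption)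
        hence "v \<in> V - (M \<union> B)" using pf_facts(2)[OF pf] by blast
        thus ?thesis using e by simp
      next case False show ?thesis by (rule pair_done[OF H]) (use 0 False in auto)
      qed
    qed
  next
    case (Suc n)
    have finM: "finite M" using Suc.prems finV finite_subset by blast
    have finU: "finite {P\<in>X. P \<inter> M = {}}" using pf_facts(1)[OF pf] by simp
    have fin: "finite (V - (M \<union> B))" using finV by simp
    show ?case
    proof (intro conjI impI)
      assume IF: "\<forall>P\<in>X. P \<inter> M = {} \<longrightarrow> P \<inter> B = {}"
      show "maker_time W V (Suc n) M B False \<le> enat (card M + card {P\<in>X. P \<inter> M = {}})"
      proof (cases "\<exists>P\<in>X. P \<inter> M = {}")
        case True
        then obtain P where P: "P \<in> X" "P \<inter> M = {}" by blast
        obtain x where "x \<in> P" using two_ne[OF pf_facts(3)[OF pf P(1)]] by blast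
        hence ne: "V - (M \<union> B) \<noteq> {}" using P IF pf_facts(2)[OF pf P(1)] by blast
        show ?thesis
        proof (cases "W M")
          case True thus ?thesis by simp
        next
          case nW: False
          have "Max ((\<lambda>y. maker_time W V n M (insert y B) True) ` (V - (M \<union> B))) \<le> enat (card M + card {P\<in>X. P \<inter> M = {}})"
          proof (rule Max_img_le'[OF fin ne])
            fix y assume y: "y \<in> V - (M \<union> B)"
            have cy: "card (V - (M \<union> insert y B)) \<le> n" by (rule card_free_le(2)[OF finV y Suc.prems(3)])
            have IT: "(\<exists>P0\<in>X. P0 \<inter> M = {} \<and> (\<exists>v\<in>P0. v \<notin> insert y B) \<and> (\<forall>P\<in>X. P \<inter> M = {} \<longrightarrow> P \<noteq> P0 \<longrightarrow> P \<inter> insert y B = {}))"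
            proof (cases "\<exists>Q\<in>X. Q \<inter> M = {} \<and> y \<in> Q")
              case True
              then obtain Q where Q: "Q \<in> X" "Q \<inter> M = {}" "y \<in> Q" by blast
              obtain v where v: "v \<in> Q" "v \<noteq> y" using two_other[OF pf_facts(3)[OF pf Q(1)]] by blast
              have "v \<notin> insert y B" using v Q IF by blast
              moreover have "\<forall>P\<in>X. P \<inter> M = {} \<longrightarrow> P \<noteq> Q \<longrightarrow> P \<inter> insert y B = {}"
                using IF pf_facts(4)[OF pf] Q by blast
              ultimately show ?thesis using Q v by blast
            next
              case False
              obtain v where v: "v \<in> P" using two_ne[OF pf_facts(3)[OF pf P(1)]] by blast
              have "v \<notin> insert y B" using v P IF False by blast
              moreover have "\<forall>Pa\<in>X. Pa \<inter> M = {} \<longrightarrow> Pa \<noteq> P \<longrightarrow> Pa \<inter> insert y B = {}"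
                using IF False by blast
              ultimately show ?thesis using P v by blast
            qed
            show "maker_time W V n M (insert y B) True \<le> enat (card M + card {P\<in>X. P \<inter> M = {}})"
              using Suc.IH[OF Suc.prems(1,2) cy] IT by blast
          qed
          thus ?thesis using nW ne by simp
        qed
      next case False show ?thesis by (rule pair_done[OF H]) (use Suc.prems False in auto)
      qed
    next
      assume IT: "(\<exists>P\<in>X. P \<inter> M = {}) \<longrightarrow> (\<exists>P0\<in>X. P0 \<inter> M = {} \<and> (\<exists>v\<in>P0. v \<notin> B) \<and> (\<forall>P\<in>X. P \<inter> M = {} \<longrightarrow> P \<noteq> P0 \<longrightarrow> P \<inter> B = {}))"
      show "maker_time W V (Suc n) M B True \<le> enat (card M + card {P\<in>X. P \<inter> M = {}})"
      proof (cases "\<exists>P\<in>X. P \<inter> M = {}")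
        case True
        with IT have "\<exists>P0\<in>X. P0 \<inter> M = {} \<and> (\<exists>v\<in>P0. v \<notin> B) \<and> (\<forall>P\<in>X. P \<inter> M = {} \<longrightarrow> P \<noteq> P0 \<longrightarrow> P \<inter> B = {})" by (rule mp)
        then obtain P0 v where P0: "P0 \<in> X" "P0 \<inter> M = {}" "v \<in> P0" "v \<notin> B"
          and oth: "\<forall>P\<in>X. P \<inter> M = {} \<longrightarrow> P \<noteq> P0 \<longrightarrow> P \<inter> B = {}" by (elim bexE conjE) (rule that; assumption)
        have v: "v \<in> V - (M \<union> B)" using P0 pf_facts(2)[OF pf] by blast
        hence ne: "V - (M \<union> B) \<noteq> {}" by blast
        have cv: "card (V - (insert v M \<union> B)) \<le> n" by (rule card_free_le(1)[OF finV v Suc.prems(3)])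
        have U: "{P\<in>X. P \<inter> insert v M = {}} = {P\<in>X. P \<inter> M = {}} - {P0}"
          using P0 pf_facts(4)[OF pf] by blast
        have cU: "card {P\<in>X. P \<inter> insert v M = {}} = card {P\<in>X. P \<inter> M = {}} - 1"
          unfolding U using P0 finU by (simp add: card_Diff_singleton)
        have cU1: "card {P\<in>X. P \<inter> M = {}} \<ge> 1" using P0 finU
          by (metis (mono_tags, lifting) One_nat_def Suc_leI card_gt_0_iff empty_iff mem_Collect_eq)
        have cM: "card (insert v M) = card M + 1" using v finM by simp
        have IF': "\<forall>P\<in>X. P \<inter> insert v M = {} \<longrightarrow> P \<inter> B = {}" using oth P0 by blast
        have "maker_time W V n (insert v M) B False \<le> enat (card (insert v M) + card {P\<in>X. P \<inter> insert v M = {}})"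
          using Suc.IH[of "insert v M" B] Suc.prems v cv IF' by blast
        also have "\<dots> = enat (card M + card {P\<in>X. P \<inter> M = {}})" using cU cU1 cM by simp
        finally have "Min ((\<lambda>v. maker_time W V n (insert v M) B False) ` (V - (M \<union> B))) \<le> enat (card M + card {P\<in>X. P \<inter> M = {}})"
          using fin v by (intro Min_img_le')
        thus ?thesis using ne by (cases "W M") auto
      next case False show ?thesis by (rule pair_done[OF H]) (use Suc.prems False in auto)
      qed
    qed
qed




lemma res_mono:
  "res_set_k V E k S \<Longrightarrow> S \<subseteq> S' \<Longrightarrow> S' \<subseteq> V \<Longrightarrow> res_set_k V E k S'"
  unfolding res_set_k_def resolving_wrt_def by blast

lemma res_k_Suc:
  "res_set_k V E k S \<Longrightarrow> res_set_k V E (k + 1) S"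
  unfolding res_set_k_def resolving_wrt_def gdist_k_def
proof (elim conjE, intro conjI ballI impI)
  fix x y assume a: "\<forall>x\<in>V. \<forall>y\<in>V. x \<noteq> y \<longrightarrow> (\<exists>z\<in>S. min (gdist E x z) (k + 1) \<noteq> min (gdist E y z) (k + 1))"
    and x: "x \<in> V" and y: "y \<in> V" and xy: "x \<noteq> y"
  then obtain z where "z \<in> S" "min (gdist E x z) (k + 1) \<noteq> min (gdist E y z) (k + 1)" by blast
  thus "\<exists>z\<in>S. min (gdist E x z) (k + 1 + 1) \<noteq> min (gdist E y z) (k + 1 + 1)"
    by (intro bexI[of _ z]) (auto simp: min_def split: if_splits)
qed

lemma dim_le:
  assumes "finite V" "res_set_k V E k S"
  shows "dim_k V E k \<le> card S"
proof -
  have "{card S | S. res_set_k V E k S} \<subseteq> card ` Pow V"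
    unfolding res_set_k_def resolving_wrt_def by blast
  hence "finite {card S | S. res_set_k V E k S}"
    by (rule finite_subset) (use assms(1) in simp)
  thus ?thesis unfolding dim_k_def using assms(2) by (intro Min_le) auto
qed

lemma empty_not_res:
  assumes "card V \<ge> 2"
  shows "\<not> res_set_k V E k {}"
proof -
  have fin: "finite V" using assms card.infinite by fastforce
  have "V \<noteq> {}" using assms by auto
  then obtain x where x: "x \<in> V" by blast
  have "V - {x} \<noteq> {}"
  proof
    assume "V - {x} = {}"
    hence "V \<subseteq> {x}" by blast
    hence "card V \<le> 1" using card_mono[of "{x}" V] by simp
    with assms show False by simp
  qed
  then obtain y where "y \<in> V" "y \<noteq> x" by blast
  thus ?thesis using x unfolding res_set_k_def resolving_wrt_def by blast
qed

lemma transversal_exists: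
  assumes pf: "pair_family V X" and "M' \<subseteq> V" and meet: "\<forall>P\<in>X. P \<inter> M' \<noteq> {}"
  shows "\<exists>Z. Z \<subseteq> M' \<and> transversal X Z"
proof -
  define ch where "ch = (\<lambda>P. SOME x. x \<in> P \<inter> M')"
  have chP: "ch P \<in> P \<inter> M'" if "P \<in> X" for P
  proof -
    have "\<exists>x. x \<in> P \<inter> M'" using meet that by blast
    thus ?thesis unfolding ch_def by (rule someI_ex)
  qed
  have inj: "inj_on ch X"
  proof (rule inj_onI)
    fix P Q assume P: "P \<in> X" and Q: "Q \<in> X" and e: "ch P = ch Q"
    have "ch P \<in> P \<inter> Q" using chP[OF P] chP[OF Q] e by simp
    thus "P = Q" using pf_facts(4)[OF pf P Q] by blast
  qed
  have "ch ` X \<subseteq> M'" using chP by blast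
  moreover have "card (ch ` X) = card X" by (rule card_image[OF inj])
  moreover have "\<forall>P\<in>X. ch ` X \<inter> P \<noteq> {}" using chP by blast
  ultimately have "ch ` X \<subseteq> M' \<and> transversal X (ch ` X)" unfolding transversal_def by simp
  thus ?thesis by blast
qed

lemma card_union_pairs:
  assumes pf: "pair_family V X"
  shows "card (\<Union>X) = 2 * card X"
proof -
  have "pairwise disjnt X" using pf_facts(4)[OF pf] unfolding pairwise_def disjnt_def by blast
  moreover have "\<And>A. A \<in> X \<Longrightarrow> finite A" using pf_facts(3)[OF pf] by (metis card.infinite zero_neq_numeral)
  ultimately have "card (\<Union>X) = sum card X" by (rule card_Union_disjoint)
  also have "\<dots> = sum (\<lambda>_. 2) X" using pf_facts(3)[OF pf] by simp
  finally show ?thesis by simp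
qed

lemma gdist_le_diam:
  assumes "finite V" "x \<in> V" "z \<in> V"
  shows "gdist E x z \<le> diam V E"
proof -
  have "{gdist E x y | x y. x \<in> V \<and> y \<in> V} = (\<lambda>(x, y). gdist E x y) ` (V \<times> V)" by auto
  hence "finite {gdist E x y | x y. x \<in> V \<and> y \<in> V}" using assms(1) by simp
  thus ?thesis unfolding diam_def using assms by (intro Max_ge) auto
qed

lemma res_k_eq:
  assumes "finite V" "diam V E \<le> k + 1"
  shows "res_set_k V E k = res_set V E"
proof
  fix S
  have eq: "\<And>x z. x \<in> V \<Longrightarrow> z \<in> V \<Longrightarrow> gdist_k E k x z = gdist E x z"
  proof -
    fix x z assume "x \<in> V" "z \<in> V"
    hence "gdist E x z \<le> k + 1" using gdist_le_diam[OF assms(1)] assms(2) le_trans by blast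
    thus "gdist_k E k x z = gdist E x z" unfolding gdist_k_def by simp
  qed
  show "res_set_k V E k S = res_set V E S"
  proof (cases "S \<subseteq> V")
    case False thus ?thesis unfolding res_set_k_def res_set_def resolving_wrt_def by simp
  next
    case True
    have "(\<exists>z\<in>S. gdist_k E k x z \<noteq> gdist_k E k y z) = (\<exists>z\<in>S. gdist E x z \<noteq> gdist E y z)"
      if "x \<in> V" "y \<in> V" for x y
    proof (rule bex_cong[OF refl])
      fix z assume "z \<in> S"
      hence "z \<in> V" using True by blast
      thus "(gdist_k E k x z \<noteq> gdist_k E k y z) = (gdist E x z \<noteq> gdist E y z)"
        using eq that by simp
    qed
    hence "(\<forall>x\<in>V. \<forall>y\<in>V. x \<noteq> y \<longrightarrow> (\<exists>z\<in>S. gdist_k E k x z \<noteq> gdist_k E k y z))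
       = (\<forall>x\<in>V. \<forall>y\<in>V. x \<noteq> y \<longrightarrow> (\<exists>z\<in>S. gdist E x z \<noteq> gdist E y z))"
      by (intro ball_cong refl imp_cong) simp
    thus ?thesis unfolding res_set_k_def res_set_def resolving_wrt_def by (rule arg_cong)
  qed
qed




lemma outM: "game_outcome W V = OutM \<Longrightarrow> maker_wins W V True \<and> maker_wins W V False"
  by (auto simp: game_outcome_def split: if_splits)

lemma outB: "game_outcome W V = OutB \<Longrightarrow> \<not> maker_wins W V True \<and> \<not> maker_wins W V False"
  by (auto simp: game_outcome_def split: if_splits)

lemma M_lower:
  assumes "finite V"
  shows "enat (dim_k V E k) \<le> M_val (res_set_k V E k) V" "enat (dim_k V E k) \<le> M'_val (res_set_k V E k) V"
  unfolding M_val_def M'_val_def using dim_le[OF assms] by (auto intro!: mt_lower[OF assms])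

theorem mainTheorem8:
  fixes V :: "'a set" and E :: "'a \<Rightarrow> 'a \<Rightarrow> bool" and k :: nat
  assumes "simple_graph V E" and "connected_graph V E" and "card V \<ge> 2" and "k \<ge> 1"
  shows
   "(game_outcome (res_set_k V E k) V = OutM \<longrightarrow>
       enat (dim_k V E k) \<le> M_val (res_set_k V E k) V
     \<and> M_val (res_set_k V E k) V \<le> M'_val (res_set_k V E k) V
     \<and> M'_val (res_set_k V E k) V \<le> enat (card V div 2)
     \<and> M_val (res_set_k V E (k + 1)) V \<le> M_val (res_set_k V E k) V
     \<and> M'_val (res_set_k V E (k + 1)) V \<le> M'_val (res_set_k V E k) V)
  \<and> (game_outcome (res_set_k V E k) V = OutB \<longrightarrow>
       B'_val (res_set_k V E k) V \<le> B_val (res_set_k V E k) V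
     \<and> B_val (res_set_k V E k) V \<le> enat (card V div 2)
     \<and> (k > 1 \<longrightarrow> B_val (res_set_k V E k) V \<ge> B_val (res_set_k V E (k - 1)) V
                 \<and> B'_val (res_set_k V E k) V \<ge> B'_val (res_set_k V E (k - 1)) V))
  \<and> ((diam V E \<in> {1, 2} \<or> k \<ge> diam V E - 1) \<longrightarrow>
       (game_outcome (res_set V E) V = OutM \<longrightarrow>
          M_val (res_set_k V E k) V = M_val (res_set V E) V
        \<and> M'_val (res_set_k V E k) V = M'_val (res_set V E) V)
     \<and> (game_outcome (res_set V E) V = OutB \<longrightarrow>
          B_val (res_set_k V E k) V = B_val (res_set V E) V
        \<and> B'_val (res_set_k V E k) V = B'_val (res_set V E) V))
  \<and> (\<forall>X. pairing_res V E k X \<and> card (\<Union>X) = 2 * dim_k V E k \<longrightarrow>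
       M_val (res_set_k V E k) V = enat (dim_k V E k)
     \<and> M'_val (res_set_k V E k) V = enat (dim_k V E k))
  \<and> (\<forall>X. quasi_pairing_res V E k X \<and> card (\<Union>X) = 2 * (dim_k V E k - 1)
        \<and> game_outcome (res_set_k V E k) V = OutN \<longrightarrow>
       N_val (res_set_k V E k) V = enat (dim_k V E k))"
proof -
  have finV: "finite V" using assms(1) unfolding simple_graph_def by blast
  have monoW: "\<And>S S'. res_set_k V E k S \<Longrightarrow> S \<subseteq> S' \<Longrightarrow> S' \<subseteq> V \<Longrightarrow> res_set_k V E k S'"
    by (rule res_mono)
  have partA: "game_outcome (res_set_k V E k) V = OutM \<longrightarrow>
       enat (dim_k V E k) \<le> M_val (res_set_k V E k) V
     \<and> M_val (res_set_k V E k) V \<le> M'_val (res_set_k V E k) V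
     \<and> M'_val (res_set_k V E k) V \<le> enat (card V div 2)
     \<and> M_val (res_set_k V E (k + 1)) V \<le> M_val (res_set_k V E k) V
     \<and> M'_val (res_set_k V E (k + 1)) V \<le> M'_val (res_set_k V E k) V"
  proof
    assume o: "game_outcome (res_set_k V E k) V = OutM"
    have w: "maker_wins_from (res_set_k V E k) V (card V) {} {} False"
      using outM[OF o] unfolding maker_wins_def by blast
    have h: "M'_val (res_set_k V E k) V \<le> enat (card V div 2)"
      using mt_win[OF finV, of "{}" "{}" "card V" "res_set_k V E k" False] w
      unfolding M'_val_def by simp
    have m1: "M_val (res_set_k V E (k + 1)) V \<le> M_val (res_set_k V E k) V"
      unfolding M_val_def by (rule mt_W_mono[OF finV finite.emptyI res_k_Suc])
    have m2: "M'_val (res_set_k V E (k + 1)) V \<le> M'_val (res_set_k V E k) V"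
      unfolding M'_val_def by (rule mt_W_mono[OF finV finite.emptyI res_k_Suc])
    show "enat (dim_k V E k) \<le> M_val (res_set_k V E k) V
     \<and> M_val (res_set_k V E k) V \<le> M'_val (res_set_k V E k) V
     \<and> M'_val (res_set_k V E k) V \<le> enat (card V div 2)
     \<and> M_val (res_set_k V E (k + 1)) V \<le> M_val (res_set_k V E k) V
     \<and> M'_val (res_set_k V E (k + 1)) V \<le> M'_val (res_set_k V E k) V"
      by (intro conjI M_lower[OF finV] M_le_M'[OF finV] h m1 m2)
  qed
  have partB: "game_outcome (res_set_k V E k) V = OutB \<longrightarrow>
       B'_val (res_set_k V E k) V \<le> B_val (res_set_k V E k) V
     \<and> B_val (res_set_k V E k) V \<le> enat (card V div 2)
     \<and> (k > 1 \<longrightarrow> B_val (res_set_k V E k) V \<ge> B_val (res_set_k V E (k - 1)) V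
                 \<and> B'_val (res_set_k V E k) V \<ge> B'_val (res_set_k V E (k - 1)) V)"
  proof
    assume o: "game_outcome (res_set_k V E k) V = OutB"
    have w: "\<not> maker_wins_from (res_set_k V E k) V (card V) {} {} True"
      using outB[OF o] unfolding maker_wins_def by blast
    have h: "B_val (res_set_k V E k) V \<le> enat (card V div 2)"
      using bt_lose[OF finV monoW, where B="{}" and M="{}" and n="card V" and p=True] w
      unfolding B_val_def by simp
    have m: "B_val (res_set_k V E k) V \<ge> B_val (res_set_k V E (k - 1)) V
                 \<and> B'_val (res_set_k V E k) V \<ge> B'_val (res_set_k V E (k - 1)) V" if "k > 1"
    proof -
      have r: "res_set_k V E (k - 1) S \<Longrightarrow> res_set_k V E k S" for S
        using res_k_Suc[of V E "k - 1" S] that by simp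
      have "breaker_time (res_set_k V E (k - 1)) V (card V) {} {} True \<le> breaker_time (res_set_k V E k) V (card V) {} {} True"
        by (rule bt_W_mono[OF finV finite.emptyI r])
      moreover have "breaker_time (res_set_k V E (k - 1)) V (card V) {} {} False \<le> breaker_time (res_set_k V E k) V (card V) {} {} False"
        by (rule bt_W_mono[OF finV finite.emptyI r])
      ultimately show ?thesis unfolding B_val_def B'_val_def by (rule conjI)
    qed
    show "B'_val (res_set_k V E k) V \<le> B_val (res_set_k V E k) V
     \<and> B_val (res_set_k V E k) V \<le> enat (card V div 2)
     \<and> (k > 1 \<longrightarrow> B_val (res_set_k V E k) V \<ge> B_val (res_set_k V E (k - 1)) V
                 \<and> B'_val (res_set_k V E k) V \<ge> B'_val (res_set_k V E (k - 1)) V)"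
      by (intro conjI impI B'_le_B[OF finV] h m[THEN conjunct1] m[THEN conjunct2])
  qed
  have partC: "(diam V E \<in> {1, 2} \<or> k \<ge> diam V E - 1) \<longrightarrow>
       (game_outcome (res_set V E) V = OutM \<longrightarrow>
          M_val (res_set_k V E k) V = M_val (res_set V E) V
        \<and> M'_val (res_set_k V E k) V = M'_val (res_set V E) V)
     \<and> (game_outcome (res_set V E) V = OutB \<longrightarrow>
          B_val (res_set_k V E k) V = B_val (res_set V E) V
        \<and> B'_val (res_set_k V E k) V = B'_val (res_set V E) V)"
  proof
    assume "diam V E \<in> {1, 2} \<or> k \<ge> diam V E - 1"
    hence "diam V E \<le> k + 1" using assms(4) by auto
    hence eq: "res_set_k V E k = res_set V E" by (rule res_k_eq[OF finV])
    show "(game_outcome (res_set V E) V = OutM \<longrightarrow>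
          M_val (res_set_k V E k) V = M_val (res_set V E) V
        \<and> M'_val (res_set_k V E k) V = M'_val (res_set V E) V)
     \<and> (game_outcome (res_set V E) V = OutB \<longrightarrow>
          B_val (res_set_k V E k) V = B_val (res_set V E) V
        \<and> B'_val (res_set_k V E k) V = B'_val (res_set V E) V)" unfolding eq by simp
  qed
  have partD: "\<forall>X. pairing_res V E k X \<and> card (\<Union>X) = 2 * dim_k V E k \<longrightarrow>
       M_val (res_set_k V E k) V = enat (dim_k V E k)
     \<and> M'_val (res_set_k V E k) V = enat (dim_k V E k)"
  proof (intro allI impI)
    fix X assume a: "pairing_res V E k X \<and> card (\<Union>X) = 2 * dim_k V E k"
    have pf: "pair_family V X" using a unfolding pairing_res_def by blast
    have cX: "card X = dim_k V E k" using a card_union_pairs[OF pf] by simp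
    have H: "res_set_k V E k M'" if h1: "{} \<subseteq> M'" and h2: "M' \<subseteq> V" and h3: "\<forall>P\<in>X. P \<inter> M' \<noteq> {}" for M'
    proof -
      obtain Z where Z: "Z \<subseteq> M'" "transversal X Z" using transversal_exists[OF pf h2 h3] by blast
      have "res_set_k V E k Z" using a Z h2 unfolding pairing_res_def by blast
      thus ?thesis using monoW Z h2 by blast
    qed
    have ps: "(\<forall>P\<in>X. P \<inter> {} = {} \<longrightarrow> P \<inter> {} = {}) \<longrightarrow> maker_time (res_set_k V E k) V (card V) {} {} False \<le> enat (card ({}::'a set) + card {P\<in>X. P \<inter> {} = {}})"
    proof -
      have c0: "card (V - ({} \<union> {})) \<le> card V" by simp
      note zz = pairing_strategy[where V=V and X=X and M0="{}" and W="res_set_k V E k" and M="{}" and B="{}" and n="card V", OF finV pf H subset_refl empty_subsetI c0]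
      show ?thesis by (rule conjunct1[OF zz])
    qed
    have "maker_time (res_set_k V E k) V (card V) {} {} False \<le> enat (card ({}::'a set) + card {P\<in>X. P \<inter> {} = {}})"
      by (rule mp[OF ps]) blast
    hence up: "M'_val (res_set_k V E k) V \<le> enat (dim_k V E k)" unfolding M'_val_def using cX by simp
    show "M_val (res_set_k V E k) V = enat (dim_k V E k) \<and> M'_val (res_set_k V E k) V = enat (dim_k V E k)"
      using up M_lower[OF finV] M_le_M'[OF finV, of "res_set_k V E k"] by (meson antisym order.trans)
  qed
  have partE: "\<forall>X. quasi_pairing_res V E k X \<and> card (\<Union>X) = 2 * (dim_k V E k - 1)
        \<and> game_outcome (res_set_k V E k) V = OutN \<longrightarrow>
       N_val (res_set_k V E k) V = enat (dim_k V E k)"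
  proof (intro allI impI)
    fix X assume a: "quasi_pairing_res V E k X \<and> card (\<Union>X) = 2 * (dim_k V E k - 1)
        \<and> game_outcome (res_set_k V E k) V = OutN"
    have pf: "pair_family V X" using a unfolding quasi_pairing_res_def by blast
    obtain v where v: "v \<in> V - \<Union>X" and vZ: "\<forall>Z. Z \<subseteq> V \<and> transversal X Z \<longrightarrow> res_set_k V E k (insert v Z)"
      using a unfolding quasi_pairing_res_def by blast
    have cX: "card X = dim_k V E k - 1" using a card_union_pairs[OF pf] by simp
    have cX1: "card X \<ge> 1" using pf unfolding pair_family_def by blast
    have H: "res_set_k V E k M'" if h1: "{v} \<subseteq> M'" and h2: "M' \<subseteq> V" and h3: "\<forall>P\<in>X. P \<inter> M' \<noteq> {}" for M'
    proof -
      obtain Z where Z: "Z \<subseteq> M'" "transversal X Z" using transversal_exists[OF pf h2 h3] by blast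
      have "res_set_k V E k (insert v Z)" using vZ Z h2 by blast
      moreover have "insert v Z \<subseteq> M'" using Z h1 by blast
      ultimately show ?thesis using monoW h2 by blast
    qed
    obtain n where n: "card V = Suc n" using assms(3) by (cases "card V") auto
    have cn: "card (V - ({v} \<union> {})) \<le> n" using v n finV by (simp add: card_Diff_singleton)
    have UX: "{P\<in>X. P \<inter> {v} = {}} = X" using v by blast
    have ps: "(\<forall>P\<in>X. P \<inter> {v} = {} \<longrightarrow> P \<inter> {} = {}) \<longrightarrow> maker_time (res_set_k V E k) V n {v} {} False \<le> enat (card {v} + card {P\<in>X. P \<inter> {v} = {}})"
    proof -
      have vV: "{v} \<subseteq> V" using v by blast
      show ?thesis by (rule conjunct1[OF pairing_strategy[where V=V and X=X and M0="{v}" and W="res_set_k V E k" and M="{v}" and B="{}" and n=n, OF finV pf H subset_refl vV cn]])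
    qed
    have "maker_time (res_set_k V E k) V n {v} {} False \<le> enat (card {v} + card {P\<in>X. P \<inter> {v} = {}})"
      by (rule mp[OF ps]) blast
    also have "\<dots> = enat (dim_k V E k)" using UX cX cX1 by simp
    finally have le: "maker_time (res_set_k V E k) V n {v} {} False \<le> enat (dim_k V E k)" .
    have nW: "\<not> res_set_k V E k {}" by (rule empty_not_res[OF assms(3)])
    have ne: "V - ({} \<union> {}) \<noteq> {}" using v by blast
    have "Min ((\<lambda>u. maker_time (res_set_k V E k) V n (insert u {}) {} False) ` (V - ({} \<union> {}))) \<le> enat (dim_k V E k)"
      using le v finV by (intro Min_img_le'[of _ v]) auto
    hence "N_val (res_set_k V E k) V \<le> enat (dim_k V E k)"
      unfolding N_val_def n using nW ne by simp
    moreover have "enat (dim_k V E k) \<le> N_val (res_set_k V E k) V"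
      unfolding N_val_def using dim_le[OF finV] by (auto intro!: mt_lower[OF finV])
    ultimately show "N_val (res_set_k V E k) V = enat (dim_k V E k)" by (rule antisym)
  qed
  show ?thesis using partA partB partC partD partE by blast
qed


end
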